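(* For every $t\in\mathbb{N}$, every choice of points $\mathbf{x}_1,\dots,\mathbf{x}_t\in C$ and every $\mathbf{x}\in C$, $$\sigma_t(\mathbf{x})\ge\sigma\,\|\mathbf{h}_t(\mathbf{x})\|,\qquad \mathbf{h}_t(\mathbf{x})=(\mathbf{K}_t+\sigma^2\mathbf{I})^{-1}\mathbf{k}_t(\mathbf{x}).$$
   Context: Let $C\subseteq\mathbb{R}^d$ and let $k$ be a positive semidefinite kernel with $k(\mathbf{x},\mathbf{x}')\le1$ and $k(\mathbf{x},\mathbf{x})=1$ for all $\mathbf{x},\mathbf{x}'\in C$. Let $\sigma>0$. Given $\mathbf{x}_1,\dots,\mathbf{x}_t$, $\mathbf{K}_t=[k(\mathbf{x}_i,\mathbf{x}_j)]_{i,j\le t}$, $\mathbf{k}_t(\mathbf{x})=[k(\mathbf{x}_1,\mathbf{x}),\dots,k(\mathbf{x}_t,\mathbf{x})]^T$, and $\sigma_t^2(\mathbf{x})=k(\mathbf{x},\mathbf{x})-\mathbf{k}_t(\mathbf{x})^T(\mathbf{K}_t+\sigma^2\mathbf{I})^{-1}\mathbf{k}_t(\mathbf{x})$ with $\sigma_t(\mathbf{x})\ge0$. $\|\cdot\|$ is the Euclidean norm. *)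

theory Defs
  imports "HOL-Analysis.Analysis"
begin

definition psd_kernel_on :: "'a set \<Rightarrow> ('a \<Rightarrow> 'a \<Rightarrow> real) \<Rightarrow> bool" where
  "psd_kernel_on C k \<longleftrightarrow>
     (\<forall>x\<in>C. \<forall>y\<in>C. k x y = k y x) \<and>
     (\<forall>(n::nat) (xs::nat \<Rightarrow> 'a) (c::nat \<Rightarrow> real). (\<forall>i<n. xs i \<in> C) \<longrightarrow>
        0 \<le> (\<Sum>i<n. \<Sum>j<n. c i * c j * k (xs i) (xs j)))"

text \<open>Gram matrix K_t of the points X i (index type 't has t elements).\<close>
definition gram_mat :: "('a \<Rightarrow> 'a \<Rightarrow> real) \<Rightarrow> ('t::finite \<Rightarrow> 'a) \<Rightarrow> real^'t^'t" where
  "gram_mat k X = (\<chi> i j. k (X i) (X j))"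

definition kvec :: "('a \<Rightarrow> 'a \<Rightarrow> real) \<Rightarrow> ('t::finite \<Rightarrow> 'a) \<Rightarrow> 'a \<Rightarrow> real^'t" where
  "kvec k X x = (\<chi> i. k (X i) x)"

definition reg_inv :: "('a \<Rightarrow> 'a \<Rightarrow> real) \<Rightarrow> real \<Rightarrow> ('t::finite \<Rightarrow> 'a) \<Rightarrow> real^'t^'t" where
  "reg_inv k s X = matrix_inv (gram_mat k X + (s\<^sup>2) *\<^sub>R mat 1)"

definition hvec :: "('a \<Rightarrow> 'a \<Rightarrow> real) \<Rightarrow> real \<Rightarrow> ('t::finite \<Rightarrow> 'a) \<Rightarrow> 'a \<Rightarrow> real^'t" where
  "hvec k s X x = reg_inv k s X *v kvec k X x"

definition post_var :: "('a \<Rightarrow> 'a \<Rightarrow> real) \<Rightarrow> real \<Rightarrow> ('t::finite \<Rightarrow> 'a) \<Rightarrow> 'a \<Rightarrow> real" where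
  "post_var k s X x = k x x - kvec k X x \<bullet> (reg_inv k s X *v kvec k X x)"

definition post_sd :: "('a \<Rightarrow> 'a \<Rightarrow> real) \<Rightarrow> real \<Rightarrow> ('t::finite \<Rightarrow> 'a) \<Rightarrow> 'a \<Rightarrow> real" where
  "post_sd k s X x = sqrt (post_var k s X x)"

end

theory Submission
  imports Defs
begin

lemma psd_fin:
  assumes "psd_kernel_on C k" "finite I" "\<forall>i\<in>I. Y i \<in> C"
  shows "0 \<le> (\<Sum>i\<in>I. \<Sum>j\<in>I. c i * c j * k (Y i) (Y j))"
proof -
  obtain g where g: "bij_betw g {0..<card I} I" using ex_bij_betw_nat_finite[OF assms(2)] by blast
  have "0 \<le> (\<Sum>i<card I. \<Sum>j<card I. (c \<circ> g) i * (c \<circ> g) j * k ((Y \<circ> g) i) ((Y \<circ> g) j))"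
  proof -
    have "\<forall>i<card I. (Y \<circ> g) i \<in> C"
      using assms(3) g unfolding bij_betw_def by auto
    then show ?thesis using assms(1) unfolding psd_kernel_on_def by blast
  qed
  also have "\<dots> = (\<Sum>i\<in>I. \<Sum>j\<in>I. c i * c j * k (Y i) (Y j))"
    using g atLeast0LessThan
    by (simp add: sum.reindex_bij_betw[OF g, symmetric])
  finally show ?thesis .
qed

lemma comp_A:
  fixes v :: "real^'t::finite"
  shows "((gram_mat k X + s *\<^sub>R mat 1) *v v) $ i = (\<Sum>j\<in>UNIV. k (X i) (X j) * v$j) + s * v$i"
proof -
  have "((gram_mat k X + s *\<^sub>R mat 1) *v v) $ i = (\<Sum>j\<in>UNIV. k (X i) (X j) * v$j + (if i = j then s * v$j else 0))"
    by (auto simp add: matrix_vector_mult_def gram_mat_def mat_def algebra_simps intro!: sum.cong)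
  also have "\<dots> = (\<Sum>j\<in>UNIV. k (X i) (X j) * v$j) + s * v$i"
    by (simp add: sum.distrib)
  finally show ?thesis .
qed

lemma quad_A:
  fixes v :: "real^'t::finite"
  shows "v \<bullet> ((gram_mat k X + s *\<^sub>R mat 1) *v v) = (\<Sum>i\<in>UNIV. \<Sum>j\<in>UNIV. v$i * v$j * k (X i) (X j)) + s * (v \<bullet> v)"
proof -
  have "v \<bullet> ((gram_mat k X + s *\<^sub>R mat 1) *v v) = (\<Sum>i\<in>UNIV. v$i * ((\<Sum>j\<in>UNIV. k (X i) (X j) * v$j) + s * v$i))"
    by (simp add: inner_vec_def comp_A)
  also have "\<dots> = (\<Sum>i\<in>UNIV. \<Sum>j\<in>UNIV. v$i * v$j * k (X i) (X j)) + s * (v \<bullet> v)"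
    by (simp add: inner_vec_def sum.distrib sum_distrib_left sum_distrib_right algebra_simps)
  finally show ?thesis .
qed

lemma inv_right:
  fixes A :: "real^'n::finite^'n"
  assumes "invertible A" shows "A ** matrix_inv A = mat 1"
  using assms unfolding invertible_def matrix_inv_def by (rule someI_ex[where P="\<lambda>A'. A ** A' = mat 1 \<and> A' ** A = mat 1", THEN conjunct1])


lemma sum_opt:
  fixes f :: "'t::finite option \<Rightarrow> real"
  shows "(\<Sum>i\<in>UNIV. f i) = f None + (\<Sum>i\<in>UNIV. f (Some i))"
  by (simp add: UNIV_option_conv sum.reindex)

theorem mainTheorem15:
  fixes C :: "'a::euclidean_space set" and k :: "'a \<Rightarrow> 'a \<Rightarrow> real" and \<sigma> :: real
    and X :: "'t::finite \<Rightarrow> 'a" and x :: 'a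
  assumes "psd_kernel_on C k"
    and "\<forall>y\<in>C. \<forall>z\<in>C. k y z \<le> 1"
    and "\<forall>y\<in>C. k y y = 1"
    and "\<sigma> > 0"
    and "\<forall>i. X i \<in> C"
    and "x \<in> C"
  shows "post_sd k \<sigma> X x \<ge> \<sigma> * norm (hvec k \<sigma> X x)"
proof -
  define A where "A = gram_mat k X + (\<sigma>\<^sup>2) *\<^sub>R mat 1"
  define kv where "kv = kvec k X x"
  define h where "h = hvec k \<sigma> X x"
  define Q where "Q = (\<lambda>v::real^'t. \<Sum>i\<in>UNIV. \<Sum>j\<in>UNIV. v$i * v$j * k (X i) (X j))"
  have Qpos: "Q v \<ge> 0" for v
    unfolding Q_def using psd_fin[OF assms(1), of UNIV X "\<lambda>i. v$i"] assms(5) by simp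
  have quad: "v \<bullet> (A *v v) = Q v + \<sigma>\<^sup>2 * (v \<bullet> v)" for v
    unfolding A_def Q_def by (rule quad_A)
  have ker: "\<forall>v. A *v v = 0 \<longrightarrow> v = 0"
  proof (intro allI impI)
    fix v assume "A *v v = 0"
    then have "Q v + \<sigma>\<^sup>2 * (v \<bullet> v) = 0" using quad[of v] by simp
    moreover have "\<sigma>\<^sup>2 > 0" using assms(4) by simp
    ultimately have "v \<bullet> v \<le> 0" using Qpos[of v]
      by (smt (verit, best) inner_ge_zero mult_pos_pos)
    then show "v = 0" by (meson inner_eq_zero_iff inner_ge_zero order_antisym)
  qed
  have invA: "invertible A"
    using ker matrix_left_invertible_ker invertible_left_inverse by blast
  have Ah: "A *v h = kv"
    unfolding h_def hvec_def reg_inv_def kv_def A_def[symmetric]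
    by (simp add: matrix_vector_mul_assoc inv_right[OF invA])
  have kh: "kv \<bullet> h = Q h + \<sigma>\<^sup>2 * (h \<bullet> h)"
    using quad[of h] Ah by (simp add: inner_commute)
  have kvi: "kv \<bullet> h = (\<Sum>i\<in>UNIV. h$i * k (X i) x)"
    by (simp add: kv_def kvec_def inner_vec_def mult.commute)
  have sym: "k x (X i) = k (X i) x" for i
    using assms(1,5,6) unfolding psd_kernel_on_def by blast
  define c where "c = (\<lambda>p. case p of None \<Rightarrow> -1 | Some i \<Rightarrow> h$i)"
  define Y where "Y = (\<lambda>p. case p of None \<Rightarrow> x | Some i \<Rightarrow> X i)"
  have "0 \<le> (\<Sum>i\<in>UNIV. \<Sum>j\<in>UNIV. c i * c j * k (Y i) (Y j))"
    using psd_fin[OF assms(1), of "UNIV :: 't option set" Y c] assms(5,6)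
    by (simp add: Y_def split: option.split)
  also have "\<dots> = k x x - 2 * (kv \<bullet> h) + Q h"
    by (simp add: sum_opt c_def Y_def kvi Q_def sym sum.distrib sum_subtractf sum_negf algebra_simps)
  finally have aug: "0 \<le> k x x - 2 * (kv \<bullet> h) + Q h" .
  have kxx: "k x x = 1" using assms(3,6) by simp
  have pv: "post_var k \<sigma> X x = 1 - kv \<bullet> h"
    unfolding post_var_def kv_def h_def hvec_def kxx by simp
  have "(\<sigma> * norm h)\<^sup>2 \<le> post_var k \<sigma> X x"
  proof -
    have "(\<sigma> * norm h)\<^sup>2 = \<sigma>\<^sup>2 * (h \<bullet> h)" by (simp add: power_mult_distrib power2_norm_eq_inner)
    then show ?thesis using aug kh pv kxx by linarith
  qed
  then have "sqrt ((\<sigma> * norm h)\<^sup>2) \<le> post_sd k \<sigma> X x"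
    unfolding post_sd_def by (rule real_sqrt_le_mono)
  then show ?thesis using assms(4) by (simp add: h_def)
qed

end
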